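(* For every $\omega\in\Omega^*$, $W^*\chi_\omega=\varphi_\omega$, i.e. $\chi_\omega(Wf)=\varphi_\omega(f)$ for all $f\in L^{\infty}(\mathbb{R}_+^{\times})$.
   Context: $L^{\infty}(\mathbb{R}_+)$ and $L^{\infty}(\mathbb{R}_+^{\times})$ are the real-valued essentially bounded measurable functions on $[0,\infty)$ and $[1,\infty)$. $W:L^{\infty}(\mathbb{R}_+^{\times})\to L^{\infty}(\mathbb{R}_+)$, $(Wf)(x)=f(e^x)$, with adjoint $(W^*\chi)(f)=\chi(Wf)$. Let $\beta\mathbb{N}_0$ be the Stone–Čech compactification of $\mathbb{N}_0$ (points = ultrafilters), $\tau$ the extension of $n\mapsto n+1$, $\Omega=(\beta\mathbb{N}_0\times[0,1])/\sim$ with $(\tau\eta,0)\sim(\eta,1)$, containing $\mathbb{R}_+$ via $(n,t)\mapsto n+t$, $\Omega^*=\Omega\setminus\mathbb{R}_+$; each $\omega=(\eta,t)$ is identified with the ultrafilter $\{A+t:A\in\eta\}$ on $\mathbb{R}_+$, and $e^\omega=\{e^A:A\in\omega\}$ is an ultrafilter on $[1,\infty)$. Define $\chi_\omega(g)=\omega\text{-}\lim_xe^{-x}\int_0^xg(t)e^t\,dt$ for $g\in L^{\infty}(\mathbb{R}_+)$ and $\varphi_\omega(f)=e^\omega\text{-}\lim_x\frac1x\int_1^xf(t)\,dt$ for $f\in L^{\infty}(\mathbb{R}_+^{\times})$ (limits along ultrafilters). *)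

theory Defs
  imports "HOL-Analysis.Analysis"
begin

text \<open>Ultrafilters on the natural numbers (points of the Stone-Cech compactification).\<close>
definition is_ultrafilter :: "nat filter \<Rightarrow> bool" where
  "is_ultrafilter F \<longleftrightarrow> F \<noteq> bot \<and> (\<forall>P. eventually P F \<or> eventually (\<lambda>x. \<not> P x) F)"

text \<open>A point of the remainder: not a principal ultrafilter (no singleton belongs to it).\<close>
definition nonprincipal :: "nat filter \<Rightarrow> bool" where
  "nonprincipal F \<longleftrightarrow> (\<forall>n. \<not> eventually (\<lambda>k. k = n) F)"

text \<open>Representatives (eta, t) of points of Omega* = Omega minus R_+.\<close>
definition Omega_star :: "(nat filter \<times> real) set" where
  "Omega_star = {(\<eta>, t). is_ultrafilter \<eta> \<and> nonprincipal \<eta> \<and> t \<in> {0..1}}"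

definition omega_filter :: "nat filter \<times> real \<Rightarrow> real filter" where
  "omega_filter \<omega> = filtermap (\<lambda>n. real n + snd \<omega>) (fst \<omega>)"

definition exp_omega_filter :: "nat filter \<times> real \<Rightarrow> real filter" where
  "exp_omega_filter \<omega> = filtermap exp (omega_filter \<omega>)"

definition Linf_plus :: "(real \<Rightarrow> real) set" where
  "Linf_plus = {g. g \<in> borel_measurable (restrict_space lebesgue {0..}) \<and>
      (\<exists>C. AE x in lebesgue. x \<in> {0..} \<longrightarrow> \<bar>g x\<bar> \<le> C)}"

definition Linf_mult :: "(real \<Rightarrow> real) set" where
  "Linf_mult = {f. f \<in> borel_measurable (restrict_space lebesgue {1..}) \<and>
      (\<exists>C. AE x in lebesgue. x \<in> {1..} \<longrightarrow> \<bar>f x\<bar> \<le> C)}"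

definition W :: "(real \<Rightarrow> real) \<Rightarrow> (real \<Rightarrow> real)" where
  "W f = (\<lambda>x. f (exp x))"

definition chi :: "nat filter \<times> real \<Rightarrow> (real \<Rightarrow> real) \<Rightarrow> real" where
  "chi \<omega> g = Lim (omega_filter \<omega>)
      (\<lambda>x. exp (- x) * (LINT s:{0..x}|lebesgue. g s * exp s))"

definition phi :: "nat filter \<times> real \<Rightarrow> (real \<Rightarrow> real) \<Rightarrow> real" where
  "phi \<omega> f = Lim (exp_omega_filter \<omega>)
      (\<lambda>x. (1 / x) * (LINT s:{1..x}|lebesgue. f s))"

end

theory Submission
  imports Defs
begin

lemma Lim_filtermap_eq:
  fixes f :: "'a \<Rightarrow> real"
  shows "Lim (filtermap g F) f = Lim F (\<lambda>x. f (g x))"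
proof -
  have "\<And>l. (f \<longlongrightarrow> l) (filtermap g F) = ((\<lambda>x. f (g x)) \<longlongrightarrow> l) F"
    by (rule filterlim_filtermap)
  then show ?thesis unfolding Topological_Spaces.Lim_def by simp
qed

lemma exp_image_Icc: "exp ` {0..y} = {1..exp (y::real)}"
proof
  show "exp ` {0..y} \<subseteq> {1..exp y}" by auto
next
  show "{1..exp y} \<subseteq> exp ` {0..y}"
  proof
    fix x assume x: "x \<in> {1..exp y}"
    then have "x > 0" by auto
    have "0 \<le> ln x" using x by simp
    moreover have "ln x \<le> y" using x \<open>x > 0\<close>
      by (metis atLeastAtMost_iff ln_exp ln_le_cancel_iff exp_gt_zero)
    ultimately have "ln x \<in> {0..y}" by simp
    moreover have "x = exp (ln x)" using \<open>x > 0\<close> by simp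
    ultimately show "x \<in> exp ` {0..y}" by blast
  qed
qed

lemma f_integrable:
  assumes "f \<in> Linf_mult"
  shows "f absolutely_integrable_on {1..b}"
proof -
  from assms obtain C where M: "f \<in> borel_measurable (restrict_space lebesgue {1..})"
    and C: "AE x in lebesgue. x \<in> {1..} \<longrightarrow> \<bar>f x\<bar> \<le> C"
    unfolding Linf_mult_def by auto
  have M1: "(\<lambda>x. indicator {1..} x *\<^sub>R f x) \<in> borel_measurable lebesgue"
    using M by (subst (asm) borel_measurable_restrict_space_iff) auto
  have M2: "(\<lambda>x. indicator {1..b} x *\<^sub>R f x) \<in> borel_measurable lebesgue"
  proof -
    have "(\<lambda>x. indicator {1..b} x * (indicator {1..} x *\<^sub>R f x)) \<in> borel_measurable lebesgue"
      by (rule borel_measurable_times[OF borel_measurable_indicator M1]) simp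
    moreover have "(\<lambda>x. indicator {1..b} x * (indicator {1..} x *\<^sub>R f x)) = (\<lambda>x. indicator {1..b} x *\<^sub>R f x)"
      by (auto simp: indicator_def)
    ultimately show ?thesis by simp
  qed
  have I: "integrable lebesgue (\<lambda>x. indicator {1..b} x *\<^sub>R (C::real))"
  proof -
    have "(\<lambda>_. C) absolutely_integrable_on {1..b}"
      by (rule absolutely_integrable_on_const) simp
    then show ?thesis by (simp add: set_integrable_def)
  qed
  have "integrable lebesgue (\<lambda>x. indicator {1..b} x *\<^sub>R f x)"
  proof (rule Bochner_Integration.integrable_bound[OF I M2])
    show "AE x in lebesgue. norm (indicator {1..b} x *\<^sub>R f x) \<le> norm (indicator {1..b} x *\<^sub>R C)"
      using C by eventually_elim (auto simp: indicator_def)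
  qed
  then show ?thesis unfolding set_integrable_def .
qed

theorem theorem4p1:
  fixes \<omega> :: "nat filter \<times> real" and f :: "real \<Rightarrow> real"
  assumes "\<omega> \<in> Omega_star" and "f \<in> Linf_mult"
  shows "chi \<omega> (W f) = phi \<omega> f"
proof -
  have eq: "exp (- y) * (LINT s:{0..y}|lebesgue. W f s * exp s)
      = (1 / exp y) * (LINT s:{1..exp y}|lebesgue. f s)" for y
  proof -
    have S: "{0..y} \<in> sets lebesgue" by simp
    have d: "\<And>x. x \<in> {0..y} \<Longrightarrow> (exp has_field_derivative exp x) (at x within {0..y})"
      by (auto intro: derivative_eq_intros)
    have inj: "inj_on exp {0..y}" by (simp add: inj_on_def)
    have fi: "f absolutely_integrable_on exp ` {0..y}"
      using f_integrable[OF assms(2)] exp_image_Icc by simp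
    from has_absolute_integral_change_of_variables_1'[OF S d inj, of f "integral (exp ` {0..y}) f"] fi
    have A: "(\<lambda>x. \<bar>exp x\<bar> * f (exp x)) absolutely_integrable_on {0..y}"
      and B: "integral {0..y} (\<lambda>x. \<bar>exp x\<bar> * f (exp x)) = integral (exp ` {0..y}) f"
      by auto
    have fg: "(\<lambda>s. W f s * exp s) = (\<lambda>x. \<bar>exp x\<bar> * f (exp x))"
      by (auto simp: W_def)
    have "(LINT s:{0..y}|lebesgue. W f s * exp s) = integral {0..y} (\<lambda>x. \<bar>exp x\<bar> * f (exp x))"
      unfolding fg using A by (simp add: set_lebesgue_integral_eq_integral)
    also have "\<dots> = integral {1..exp y} f" using B exp_image_Icc by simp
    also have "\<dots> = (LINT s:{1..exp y}|lebesgue. f s)"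
      using f_integrable[OF assms(2)] by (simp add: set_lebesgue_integral_eq_integral)
    finally show ?thesis by (simp add: exp_minus field_simps)
  qed
  show ?thesis
    unfolding chi_def phi_def exp_omega_filter_def Lim_filtermap_eq eq ..
qed

end
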